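(* Let $m,p,n$ be positive integers with $p\mid m$ and $n>1$. If $(T_1,\ldots,T_n)$ is a $\boldsymbol\Theta_n$-contraction, then $(\gamma_1T_1,\ldots,\gamma_{n-1}T_{n-1})$ is a $\Gamma_{n-1}$-contraction, where $\gamma_j=\frac{n-j}{n}$ for $j=1,\ldots,n-1$.
   Context: Put $q=m/p$. $G(m,p,n)$ is the group of $n\times n$ monomial matrices whose nonzero entries are $m$-th roots of unity and whose product of nonzero entries is an $(m/p)$-th root of unity. Let $s_i$ be the $i$-th elementary symmetric polynomial; $\theta_i(z)=s_i(z_1^m,\ldots,z_n^m)$ for $1\le i\le n-1$, $\theta_n(z)=(z_1\cdots z_n)^q$, $\boldsymbol\theta=(\theta_1,\dots,\theta_n)$, $\boldsymbol\Theta_n=\boldsymbol\theta(\mathbb D^n)$, $\overline{\boldsymbol\Theta}_n=\boldsymbol\theta(\overline{\mathbb D}^n)$. A commuting tuple $(T_1,\dots,T_n)$ of bounded operators on a Hilbert space is a $\boldsymbol\Theta_n$-contraction if $\|f(T_1,\dots,T_n)\|\le\sup_{\overline{\boldsymbol\Theta}_n}|f|$ for every polynomial $f\in\mathbb C[z_1,\dots,z_n]$. $\Gamma_k=\boldsymbol s(\overline{\mathbb D}^k)$ is the closed symmetrized polydisc, and a $\Gamma_k$-contraction is a commuting $k$-tuple $S$ with $\|f(S)\|\le\sup_{\Gamma_k}|f|$ for all polynomials $f$ in $k$ variables. *)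

theory Defs
  imports "HOL-Analysis.Analysis"
begin

text \<open>A complex Hilbert space is represented by a real Hilbert space (type class
 real_inner + complete_space) together with a real-linear map J (multiplication by i)
 with J (J x) = - x which is isometric for the real inner product.
 The complex inner product is then inner x y + i * inner x (J y) (up to convention),
 and the norm is the same.\<close>

definition complex_structure :: "('h::real_inner \<Rightarrow> 'h) \<Rightarrow> bool" where
  "complex_structure J \<longleftrightarrow> linear J \<and> (\<forall>x. J (J x) = - x) \<and> (\<forall>x y. inner (J x) (J y) = inner x y)"

definition cscale :: "('h::real_vector \<Rightarrow> 'h) \<Rightarrow> complex \<Rightarrow> 'h \<Rightarrow> 'h" where
  "cscale J c x = Re c *\<^sub>R x + Im c *\<^sub>R J x"

definition bounded_op :: "('h::real_normed_vector \<Rightarrow> 'h) \<Rightarrow> ('h \<Rightarrow> 'h) \<Rightarrow> bool" where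
  "bounded_op J T \<longleftrightarrow> bounded_linear T \<and> T \<circ> J = J \<circ> T"

definition commuting_tuple :: "nat \<Rightarrow> (nat \<Rightarrow> 'h \<Rightarrow> 'h) \<Rightarrow> bool" where
  "commuting_tuple k T \<longleftrightarrow> (\<forall>i<k. \<forall>j<k. T i \<circ> T j = T j \<circ> T i)"

text \<open>A polynomial in the variables z_0, ..., z_(k-1) is given by its coefficient function on
 multi-indices alpha :: nat => nat; finitely many coefficients are nonzero and only
 variables with index < k occur.\<close>
definition mpoly :: "nat \<Rightarrow> ((nat \<Rightarrow> nat) \<Rightarrow> complex) \<Rightarrow> bool" where
  "mpoly k c \<longleftrightarrow> finite {\<alpha>. c \<alpha> \<noteq> 0} \<and> (\<forall>\<alpha>. c \<alpha> \<noteq> 0 \<longrightarrow> (\<forall>i\<ge>k. \<alpha> i = 0))"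

definition mpeval :: "nat \<Rightarrow> ((nat \<Rightarrow> nat) \<Rightarrow> complex) \<Rightarrow> (nat \<Rightarrow> complex) \<Rightarrow> complex" where
  "mpeval k c z = (\<Sum>\<alpha>\<in>{\<alpha>. c \<alpha> \<noteq> 0}. c \<alpha> * (\<Prod>i<k. z i ^ \<alpha> i))"

definition opmono :: "nat \<Rightarrow> (nat \<Rightarrow> 'h \<Rightarrow> 'h) \<Rightarrow> (nat \<Rightarrow> nat) \<Rightarrow> 'h \<Rightarrow> 'h" where
  "opmono k T \<alpha> = foldr (\<lambda>i g. (T i ^^ \<alpha> i) \<circ> g) [0..<k] id"

definition opeval :: "('h::real_vector \<Rightarrow> 'h) \<Rightarrow> nat \<Rightarrow> ((nat \<Rightarrow> nat) \<Rightarrow> complex) \<Rightarrow> (nat \<Rightarrow> 'h \<Rightarrow> 'h) \<Rightarrow> 'h \<Rightarrow> 'h" where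
  "opeval J k c T = (\<lambda>x. \<Sum>\<alpha>\<in>{\<alpha>. c \<alpha> \<noteq> 0}. cscale J (c \<alpha>) (opmono k T \<alpha> x))"

definition esym :: "nat \<Rightarrow> nat \<Rightarrow> (nat \<Rightarrow> complex) \<Rightarrow> complex" where
  "esym k j w = (\<Sum>S\<in>{S. S \<subseteq> {..<k} \<and> card S = j}. \<Prod>i\<in>S. w i)"

definition closed_polydisc :: "nat \<Rightarrow> (nat \<Rightarrow> complex) set" where
  "closed_polydisc k = {z. (\<forall>i<k. cmod (z i) \<le> 1) \<and> (\<forall>i\<ge>k. z i = 0)}"

text \<open>Symmetrization map s = (s_1,...,s_k), coordinates indexed 0..k-1.\<close>
definition symmap :: "nat \<Rightarrow> (nat \<Rightarrow> complex) \<Rightarrow> (nat \<Rightarrow> complex)" where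
  "symmap k z = (\<lambda>i. if i < k then esym k (Suc i) z else 0)"

definition Gamma :: "nat \<Rightarrow> (nat \<Rightarrow> complex) set" where
  "Gamma k = symmap k ` closed_polydisc k"

text \<open>theta = (theta_1,...,theta_n) for G(m,p,n), q = m/p; coordinates indexed 0..n-1:
 theta_(i+1) = s_(i+1)(z^m) for i < n-1, theta_n = (z_1 ... z_n)^q.\<close>
definition thetamap :: "nat \<Rightarrow> nat \<Rightarrow> nat \<Rightarrow> (nat \<Rightarrow> complex) \<Rightarrow> (nat \<Rightarrow> complex)" where
  "thetamap m p n z = (\<lambda>i. if i < n - 1 then esym n (Suc i) (\<lambda>j. z j ^ m)
                          else if i = n - 1 then (\<Prod>j<n. z j) ^ (m div p) else 0)"

definition Theta_closed :: "nat \<Rightarrow> nat \<Rightarrow> nat \<Rightarrow> (nat \<Rightarrow> complex) set" where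
  "Theta_closed m p n = thetamap m p n ` closed_polydisc n"

definition K_contraction :: "('h::{real_inner,complete_space} \<Rightarrow> 'h) \<Rightarrow> (nat \<Rightarrow> complex) set \<Rightarrow> nat \<Rightarrow> (nat \<Rightarrow> 'h \<Rightarrow> 'h) \<Rightarrow> bool" where
  "K_contraction J K k T \<longleftrightarrow> (\<forall>i<k. bounded_op J (T i)) \<and> commuting_tuple k T \<and>
     (\<forall>c. mpoly k c \<longrightarrow> onorm (opeval J k c T) \<le> (SUP z\<in>K. cmod (mpeval k c z)))"

definition Theta_contraction where
  "Theta_contraction J m p n T \<longleftrightarrow> K_contraction J (Theta_closed m p n) n T"

definition Gamma_contraction where
  "Gamma_contraction J k T \<longleftrightarrow> K_contraction J (Gamma k) k T"

end

theory Submission imports Defs "HOL-Computational_Algebra.Fundamental_Theorem_Algebra"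
begin

lemma const_poly_prod': "(\<Prod>x\<in>A. [:f x:]) = [:\<Prod>x\<in>A. f x:]"
  by (induction A rule: infinite_finite_induct) (auto simp: mult.commute)

lemma vieta:
  fixes w :: "nat \<Rightarrow> complex"
  assumes "j \<le> k"
  shows "coeff (\<Prod>i<k. [:-w i, 1:]) j = (-1)^(k-j) * esym k (k-j) w"
proof -
  let ?A = "{..<k}"
  have "(\<Prod>i<k. [:-w i, 1:]) = (\<Prod>i<k. monom 1 1 + [:-w i:])"
    by (intro prod.cong refl) (simp add: monom_altdef)
  also have "\<dots> = (\<Sum>X\<in>Pow ?A. (\<Prod>x\<in>X. monom 1 1) * (\<Prod>x\<in>?A-X. [:-w x:]))"
    by (rule prod_add) simp
  also have "\<dots> = (\<Sum>X\<in>Pow ?A. monom (\<Prod>x\<in>?A-X. -w x) (card X))"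
    by (intro sum.cong refl) (simp add: const_poly_prod' monom_power smult_monom mult.commute)
  finally have "coeff (\<Prod>i<k. [:-w i, 1:]) j = (\<Sum>X\<in>Pow ?A. if card X = j then (\<Prod>x\<in>?A-X. -w x) else 0)"
    by (simp add: coeff_sum)
  also have "\<dots> = (\<Sum>X\<in>{X. X \<subseteq> ?A \<and> card X = j}. (\<Prod>x\<in>?A-X. -w x))"
    by (subst sum.inter_filter[symmetric]) (auto intro!: sum.cong)
  also have "\<dots> = (\<Sum>X\<in>{X. X \<subseteq> ?A \<and> card X = j}. (-1)^(k-j) * (\<Prod>x\<in>?A-X. w x))"
  proof (intro sum.cong refl)
    fix X assume X: "X \<in> {X. X \<subseteq> ?A \<and> card X = j}"
    then have "card (?A - X) = k - j" by (auto simp: card_Diff_subset finite_subset)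
    then show "(\<Prod>x\<in>?A-X. -w x) = (-1)^(k-j) * (\<Prod>x\<in>?A-X. w x)"
    proof -
      have "(\<Prod>x\<in>?A-X. -w x) = (\<Prod>x\<in>?A-X. (-1) * w x)" by simp
      also have "\<dots> = (-1)^(k-j) * (\<Prod>x\<in>?A-X. w x)"
        by (simp only: prod.distrib prod_constant \<open>card (?A - X) = k - j\<close>)
      finally show ?thesis .
    qed
  qed
  also have "\<dots> = (-1)^(k-j) * esym k (k-j) w"
    unfolding esym_def sum_distrib_left
  proof (rule sum.reindex_bij_witness[where i="\<lambda>X. ?A - X" and j="\<lambda>X. ?A - X"])
    fix X assume "X \<in> {S. S \<subseteq> ?A \<and> card S = k - j}"
    then show "?A - (?A - X) = X" "?A - X \<in> {X. X \<subseteq> ?A \<and> card X = j}"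
      using assms by (auto simp: card_Diff_subset finite_subset)
  next
    fix X assume "X \<in> {S. S \<subseteq> ?A \<and> card S = j}"
    then show "?A - (?A - X) = X" "?A - X \<in> {X. X \<subseteq> ?A \<and> card X = k - j}"
      using assms by (auto simp: card_Diff_subset finite_subset)
  qed simp
  finally show ?thesis .
qed


lemma re_div_pos:
  fixes z w :: complex
  assumes "cmod z > 1" "cmod w \<le> 1"
  shows "Re (z / (z - w)) > 0"
proof -
  let ?u = "z - w"
  have "Re z * Re w + Im z * Im w = inner z w" by (simp add: inner_complex_def)
  also have "\<dots> \<le> cmod z * cmod w" by (rule norm_cauchy_schwarz)
  also have "\<dots> \<le> cmod z * 1" using assms by (intro mult_left_mono) auto
  also have "\<dots> < cmod z * cmod z" using assms by (intro mult_strict_left_mono) auto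
  also have "\<dots> = Re z * Re z + Im z * Im z" by (simp add: cmod_def power2_eq_square[symmetric])
  finally have num: "Re z * Re ?u + Im z * Im ?u > 0" by (simp add: algebra_simps)
  have "?u \<noteq> 0" using assms by auto
  then have "(Re ?u)\<^sup>2 + (Im ?u)\<^sup>2 > 0"
    by (metis complex_neq_0)
  with num show ?thesis by (simp add: Re_divide)
qed

lemma deriv_roots_disc:
  fixes w :: "nat \<Rightarrow> complex"
  assumes n: "n \<ge> 1" and w: "\<forall>i<n. cmod (w i) \<le> 1"
    and z: "poly (pderiv (\<Prod>i<n. [:-w i, 1:])) z = 0"
  shows "cmod z \<le> 1"
proof (rule ccontr)
  assume "\<not> cmod z \<le> 1"
  then have z1: "cmod z > 1" by simp
  have ne: "z - w i \<noteq> 0" if "i < n" for i using w that z1 by auto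
  define P where "P = (\<Prod>i<n. z - w i)"
  have P0: "P \<noteq> 0" unfolding P_def using ne by simp
  have "poly (pderiv (\<Prod>i<n. [:-w i, 1:])) z = (\<Sum>a<n. \<Prod>i\<in>{..<n}-{a}. z - w i)"
    by (simp add: pderiv_prod poly_sum poly_prod pderiv_pCons)
  also have "\<dots> = (\<Sum>a<n. P / (z - w a))"
  proof (intro sum.cong refl)
    fix a assume a: "a \<in> {..<n}"
    have "P = (z - w a) * (\<Prod>i\<in>{..<n}-{a}. z - w i)"
      unfolding P_def using a by (simp add: prod.remove)
    then show "(\<Prod>i\<in>{..<n}-{a}. z - w i) = P / (z - w a)"
      using ne a by (simp add: field_simps)
  qed
  also have "\<dots> = P * (\<Sum>a<n. 1 / (z - w a))"
    by (simp add: sum_distrib_left)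
  finally have "(\<Sum>a<n. 1 / (z - w a)) = 0" using z P0 by simp
  then have "Re (z * (\<Sum>a<n. 1 / (z - w a))) = 0" by simp
  moreover have "Re (z * (\<Sum>a<n. 1 / (z - w a))) > 0"
  proof -
    have "Re (z * (\<Sum>a<n. 1 / (z - w a))) = (\<Sum>a<n. Re (z / (z - w a)))"
      by (simp add: sum_distrib_left Re_sum)
    also have "\<dots> > 0"
      using n w z1 by (intro sum_pos re_div_pos) (auto simp: lessThan_empty_iff)
    finally show ?thesis .
  qed
  ultimately show False by simp
qed


lemma esym_cong:
  assumes "\<And>i. i < k \<Longrightarrow> u i = v i"
  shows "esym k j u = esym k j v"
  unfolding esym_def using assms by (intro sum.cong refl prod.cong) auto

lemma gamma_point:
  fixes w :: "nat \<Rightarrow> complex"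
  assumes n: "n \<ge> 2" and w: "\<forall>i<n. cmod (w i) \<le> 1"
  shows "\<exists>u\<in>closed_polydisc (n-1). \<forall>j<n-1.
           esym (n-1) (Suc j) u = of_real (real (n - Suc j) / real n) * esym n (Suc j) w"
proof -
  define P where "P = (\<Prod>i<n. [:-w i, 1:])"
  define Q where "Q = pderiv P"
  have degP: "degree P = n" unfolding P_def by (subst degree_prod_sum_eq) auto
  have lcP: "lead_coeff P = 1" unfolding P_def by (simp add: lead_coeff_prod)
  have degQ: "degree Q = n - 1" unfolding Q_def by (simp add: degree_pderiv degP)
  have lcQ: "lead_coeff Q = of_nat n"
    using degQ degP lcP n unfolding Q_def by (simp add: coeff_pderiv)
  obtain r where r: "smult (lead_coeff Q) (\<Prod>i<degree Q. [:-r i, 1:]) = Q"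
    by (rule complex_poly_decompose')
  define u where "u = (\<lambda>i. if i < n - 1 then r i else 0)"
  have Qr: "Q = smult (of_nat n) (\<Prod>i<n-1. [:-u i, 1:])"
  proof -
    have "smult (of_nat n) (\<Prod>i<n-1. [:-r i, 1:]) = Q" using r lcQ by (simp only: degQ)
    moreover have "(\<Prod>i<n-1. [:-r i, 1:]) = (\<Prod>i<n-1. [:-u i, 1:])"
      unfolding u_def by (intro prod.cong) auto
    ultimately show ?thesis by simp
  qed
  have "u \<in> closed_polydisc (n-1)"
    unfolding closed_polydisc_def
  proof (intro CollectI conjI allI impI)
    fix i assume i: "i < n - 1"
    have "poly Q (u i) = 0"
      using i unfolding Qr by (simp add: poly_prod) (metis lessThan_iff)
    then show "cmod (u i) \<le> 1"
      using deriv_roots_disc[of n w "u i"] n w unfolding Q_def P_def by simp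
  qed (simp add: u_def)
  moreover have "esym (n-1) (Suc j) u = of_real (real (n - Suc j) / real n) * esym n (Suc j) w"
    if j: "j < n - 1" for j
  proof -
    define d where "d = n - 2 - j"
    have "coeff Q d = of_nat n * ((-1)^(n-1-d) * esym (n-1) (n-1-d) u)"
      unfolding Qr using j by (simp add: vieta d_def)
    also have "n - 1 - d = Suc j" using j n unfolding d_def by simp
    finally have 1: "coeff Q d = of_nat n * ((-1)^(Suc j) * esym (n-1) (Suc j) u)" .
    have "coeff Q d = of_nat (Suc d) * ((-1)^(n - Suc d) * esym n (n - Suc d) w)"
      unfolding Q_def coeff_pderiv P_def using j by (subst vieta) (auto simp: d_def)
    also have "n - Suc d = Suc j" using j n unfolding d_def by simp
    also have "Suc d = n - Suc j" using j n unfolding d_def by simp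
    finally have 2: "coeff Q d = of_nat (n - Suc j) * ((-1)^(Suc j) * esym n (Suc j) w)" .
    from 1 2 have "of_nat n * esym (n-1) (Suc j) u = of_nat (n - Suc j) * esym n (Suc j) w"
      by (simp add: power_minus1_even)
    then show ?thesis using n by (simp add: field_simps)
  qed
  ultimately show ?thesis by blast
qed


lemma foldr_comp_id: "foldr (\<lambda>i. (\<circ>) (h i)) xs z = foldr (\<lambda>i. (\<circ>) (h i)) xs id \<circ> z"
  by (induction xs) (auto simp: o_assoc)

lemma opmono_Suc: "opmono (Suc k) T \<alpha> = opmono k T \<alpha> \<circ> (T k ^^ \<alpha> k)"
  unfolding opmono_def by simp (rule foldr_comp_id)

lemma opmono_0: "opmono 0 T \<alpha> = id"
  unfolding opmono_def by simp

lemma linear_funpow: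
  fixes f :: "'a::real_vector \<Rightarrow> 'a"
  shows "linear f \<Longrightarrow> linear (f ^^ a)"
proof (induction a)
  case (Suc a)
  then show ?case using linear_compose[of "f ^^ a" f] by (simp add: o_def)
qed (simp add: linear_id)

lemma linear_opmono: "(\<forall>i<k. linear (T i)) \<Longrightarrow> linear (opmono k T \<alpha>)"
  by (induction k) (auto simp: opmono_0 opmono_Suc intro: linear_compose linear_id linear_funpow)

lemma funpow_scale:
  fixes f :: "'a::real_vector \<Rightarrow> 'a"
  assumes "linear f"
  shows "((\<lambda>x. g *\<^sub>R f x) ^^ a) x = (g ^ a) *\<^sub>R (f ^^ a) x"
  by (induction a) (auto simp: linear.scaleR[OF assms] linear_funpow)

lemma opmono_scale:
  assumes "\<forall>i<k. linear (T i)"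
  shows "opmono k (\<lambda>i x. g i *\<^sub>R T i x) \<alpha> x = (\<Prod>i<k. g i ^ \<alpha> i) *\<^sub>R opmono k T \<alpha> x"
  using assms
proof (induction k arbitrary: x)
  case 0
  then show ?case by (simp add: opmono_0)
next
  case (Suc k)
  have lin: "linear (opmono k T \<alpha>)" using Suc.prems by (intro linear_opmono) auto
  have "opmono (Suc k) (\<lambda>i x. g i *\<^sub>R T i x) \<alpha> x
      = opmono k (\<lambda>i x. g i *\<^sub>R T i x) \<alpha> (((\<lambda>x. g k *\<^sub>R T k x) ^^ \<alpha> k) x)"
    by (simp add: opmono_Suc)
  also have "\<dots> = opmono k (\<lambda>i x. g i *\<^sub>R T i x) \<alpha> ((g k ^ \<alpha> k) *\<^sub>R (T k ^^ \<alpha> k) x)"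
    using Suc.prems by (subst funpow_scale) auto
  also have "\<dots> = (\<Prod>i<k. g i ^ \<alpha> i) *\<^sub>R opmono k T \<alpha> ((g k ^ \<alpha> k) *\<^sub>R (T k ^^ \<alpha> k) x)"
    using Suc by auto
  also have "\<dots> = (\<Prod>i<Suc k. g i ^ \<alpha> i) *\<^sub>R opmono (Suc k) T \<alpha> x"
    by (simp add: linear.scaleR[OF lin] opmono_Suc)
  finally show ?case .
qed

lemma cscale_real: "linear J \<Longrightarrow> cscale J (c * complex_of_real r) y = cscale J c (r *\<^sub>R y)"
  unfolding cscale_def by (simp add: linear.scaleR)

lemma esym_bound:
  assumes "u \<in> closed_polydisc k"
  shows "cmod (esym k j u) \<le> 2 ^ k"
proof -
  let ?F = "{S. S \<subseteq> {..<k} \<and> card S = j}"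
  have "cmod (esym k j u) \<le> (\<Sum>S\<in>?F. cmod (\<Prod>i\<in>S. u i))"
    unfolding esym_def by (rule norm_sum)
  also have "\<dots> \<le> (\<Sum>S\<in>?F. 1)"
  proof (intro sum_mono)
    fix S assume S: "S \<in> ?F"
    have "cmod (\<Prod>i\<in>S. u i) = (\<Prod>i\<in>S. cmod (u i))" by (simp add: prod_norm)
    also have "\<dots> \<le> 1" using S assms by (intro prod_le_1) (auto simp: closed_polydisc_def)
    finally show "cmod (\<Prod>i\<in>S. u i) \<le> 1" .
  qed
  also have "\<dots> = card ?F" by simp
  also have "card ?F \<le> card (Pow {..<k})" by (intro card_mono) auto
  also have "\<dots> = 2 ^ k" by (simp add: card_Pow)
  finally show ?thesis by simp
qed

lemma mpeval_bdd:
  assumes "mpoly k c"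
  shows "bdd_above ((\<lambda>z. cmod (mpeval k c z)) ` Gamma k)"
proof -
  let ?F = "{\<alpha>. c \<alpha> \<noteq> 0}"
  let ?B = "\<Sum>\<alpha>\<in>?F. cmod (c \<alpha>) * (\<Prod>i<k. (2 ^ k) ^ \<alpha> i)"
  show ?thesis
  proof (rule bdd_aboveI2)
    fix y assume "y \<in> Gamma k"
    then obtain u where u: "u \<in> closed_polydisc k" and y: "y = symmap k u"
      unfolding Gamma_def by auto
    have "cmod (mpeval k c y) \<le> (\<Sum>\<alpha>\<in>?F. cmod (c \<alpha> * (\<Prod>i<k. y i ^ \<alpha> i)))"
      unfolding mpeval_def by (rule norm_sum)
    also have "\<dots> \<le> ?B"
    proof (intro sum_mono)
      fix \<alpha> assume "\<alpha> \<in> ?F"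
      have "cmod (\<Prod>i<k. y i ^ \<alpha> i) = (\<Prod>i<k. cmod (y i) ^ \<alpha> i)"
        by (simp add: prod_norm[symmetric] norm_power)
      also have "\<dots> \<le> (\<Prod>i<k. (2 ^ k) ^ \<alpha> i)"
        using esym_bound[OF u] by (intro prod_mono conjI power_mono) (auto simp: y symmap_def)
      finally show "cmod (c \<alpha> * (\<Prod>i<k. y i ^ \<alpha> i)) \<le> cmod (c \<alpha>) * (\<Prod>i<k. (2 ^ k) ^ \<alpha> i)"
        by (simp add: norm_mult mult_left_mono)
    qed
    finally show "cmod (mpeval k c y) \<le> ?B" .
  qed
qed


theorem lemma2p7:
  fixes m p n :: nat and J :: "'h::{real_inner,complete_space} \<Rightarrow> 'h" and T :: "nat \<Rightarrow> 'h \<Rightarrow> 'h"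
  assumes "m > 0" "p > 0" "p dvd m" "n > 1"
    and "complex_structure J"
    and "Theta_contraction J m p n T"
  shows "Gamma_contraction J (n - 1) (\<lambda>i x. (real (n - Suc i) / real n) *\<^sub>R T i x)"
proof -
  define k where "k = n - 1"
  define g where "g = (\<lambda>i. real (n - Suc i) / real n)"
  have n: "n = Suc k" "n \<ge> 2" using assms(4) unfolding k_def by auto
  have bnd: "\<forall>i<n. bounded_op J (T i)" and comm: "commuting_tuple n T"
    and main: "\<And>c. mpoly n c \<Longrightarrow> onorm (opeval J n c T) \<le> (SUP z\<in>Theta_closed m p n. cmod (mpeval n c z))"
    using assms(6) unfolding Theta_contraction_def K_contraction_def by auto
  have linJ: "linear J" using assms(5) unfolding complex_structure_def by auto
  have linT: "linear (T i)" if "i < n" for i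
    using bnd that unfolding bounded_op_def by (auto intro: bounded_linear.linear)
  have TJ: "T i (J x) = J (T i x)" if "i < n" for i x
    using bnd that unfolding bounded_op_def by (metis comp_apply)
  have gpos: "g i > 0" if "i < k" for i using that n unfolding g_def by auto
  have geq: "(\<lambda>i x. (real (n - Suc i) / real n) *\<^sub>R T i x) = (\<lambda>i x. g i *\<^sub>R T i x)"
    by (simp add: g_def)
  show ?thesis
    unfolding Gamma_contraction_def K_contraction_def k_def[symmetric] geq
  proof (intro conjI allI impI)
    fix i assume i: "i < k"
    show "bounded_op J (\<lambda>x. g i *\<^sub>R T i x)"
      unfolding bounded_op_def
    proof
      show "bounded_linear (\<lambda>x. g i *\<^sub>R T i x)"
        using bnd i n unfolding bounded_op_def by (auto intro: bounded_linear_const_scaleR)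
      show "(\<lambda>x. g i *\<^sub>R T i x) \<circ> J = J \<circ> (\<lambda>x. g i *\<^sub>R T i x)"
        using i n by (auto simp: TJ linear.scaleR[OF linJ])
    qed
  next
    show "commuting_tuple k (\<lambda>i x. g i *\<^sub>R T i x)"
      unfolding commuting_tuple_def
    proof (intro allI impI ext)
      fix i j x assume ij: "i < k" "j < k"
      have "T i (T j x) = T j (T i x)"
        using comm ij n unfolding commuting_tuple_def by (metis comp_apply less_SucI)
      then show "((\<lambda>x. g i *\<^sub>R T i x) \<circ> (\<lambda>x. g j *\<^sub>R T j x)) x = ((\<lambda>x. g j *\<^sub>R T j x) \<circ> (\<lambda>x. g i *\<^sub>R T i x)) x"
        using ij n by (simp add: linear.scaleR[OF linT])
    qed
  next
    fix c assume c: "mpoly k c"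
    define F where "F = {\<alpha>. c \<alpha> \<noteq> 0}"
    define c' where "c' = (\<lambda>\<alpha>. c \<alpha> * of_real (\<Prod>i<k. g i ^ \<alpha> i))"
    have supp: "\<alpha> i = 0" if "\<alpha> \<in> F" "i \<ge> k" for \<alpha> i
      using c that unfolding mpoly_def F_def by auto
    have F': "{\<alpha>. c' \<alpha> \<noteq> 0} = F"
    proof -
      have "(\<Prod>i<k. g i ^ \<alpha> i) \<noteq> 0" for \<alpha> using gpos by (auto simp: prod_zero_iff dest: less_imp_neq[symmetric])
      then show ?thesis unfolding c'_def F_def by auto
    qed
    have c'poly: "mpoly n c'"
    proof -
      have "finite F" using c unfolding mpoly_def F_def by auto
      moreover have "\<forall>\<alpha>. c' \<alpha> \<noteq> 0 \<longrightarrow> (\<forall>i\<ge>n. \<alpha> i = 0)"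
        using supp n F' by auto
      ultimately show ?thesis unfolding mpoly_def F' by auto
    qed
    have opeq: "opeval J k c (\<lambda>i x. g i *\<^sub>R T i x) = opeval J n c' T"
    proof
      fix x
      show "opeval J k c (\<lambda>i x. g i *\<^sub>R T i x) x = opeval J n c' T x"
        unfolding opeval_def F' F_def[symmetric]
      proof (intro sum.cong refl)
        fix \<alpha> assume a: "\<alpha> \<in> F"
        have "opmono k (\<lambda>i x. g i *\<^sub>R T i x) \<alpha> x = (\<Prod>i<k. g i ^ \<alpha> i) *\<^sub>R opmono k T \<alpha> x"
          using linT n by (intro opmono_scale) auto
        moreover have "opmono n T \<alpha> = opmono k T \<alpha>"
          using supp[OF a, of k] n by (simp add: opmono_Suc)
        ultimately show "cscale J (c \<alpha>) (opmono k (\<lambda>i x. g i *\<^sub>R T i x) \<alpha> x) = cscale J (c' \<alpha>) (opmono n T \<alpha> x)"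
          unfolding c'_def by (simp only: cscale_real[OF linJ])
      qed
    qed
    have "onorm (opeval J k c (\<lambda>i x. g i *\<^sub>R T i x)) \<le> (SUP z\<in>Theta_closed m p n. cmod (mpeval n c' z))"
      unfolding opeq by (rule main[OF c'poly])
    also have "\<dots> \<le> (SUP z\<in>Gamma k. cmod (mpeval k c z))"
    proof (rule cSUP_mono)
      show "Theta_closed m p n \<noteq> {}"
        unfolding Theta_closed_def closed_polydisc_def by (auto intro!: exI[of _ "\<lambda>_. 0"])
      show "bdd_above ((\<lambda>z. cmod (mpeval k c z)) ` Gamma k)" by (rule mpeval_bdd[OF c])
    next
      fix z assume "z \<in> Theta_closed m p n"
      then obtain x where x: "x \<in> closed_polydisc n" and z: "z = thetamap m p n x"
        unfolding Theta_closed_def by auto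
      define w where "w = (\<lambda>i. x i ^ m)"
      have w: "\<forall>i<n. cmod (w i) \<le> 1"
        using x unfolding w_def closed_polydisc_def by (auto simp: norm_power intro: power_le_one)
      obtain u where u: "u \<in> closed_polydisc k"
        and ue: "\<forall>j<k. esym k (Suc j) u = of_real (g j) * esym n (Suc j) w"
        using gamma_point[OF n(2) w] unfolding k_def[symmetric] g_def by auto
      define y where "y = symmap k u"
      have yG: "y \<in> Gamma k" unfolding y_def Gamma_def using u by auto
      have "mpeval n c' z = mpeval k c y"
        unfolding mpeval_def F' F_def[symmetric]
      proof (intro sum.cong refl)
        fix \<alpha> assume a: "\<alpha> \<in> F"
        have "(\<Prod>i<n. z i ^ \<alpha> i) = (\<Prod>i<k. z i ^ \<alpha> i)"
          using supp[OF a, of k] n by simp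
        also have "\<dots> = (\<Prod>i<k. esym n (Suc i) w ^ \<alpha> i)"
          by (intro prod.cong refl) (auto simp: z thetamap_def k_def w_def)
        finally have 1: "(\<Prod>i<n. z i ^ \<alpha> i) = (\<Prod>i<k. esym n (Suc i) w ^ \<alpha> i)" .
        have "(\<Prod>i<k. y i ^ \<alpha> i) = (\<Prod>i<k. (of_real (g i) * esym n (Suc i) w) ^ \<alpha> i)"
          by (intro prod.cong refl) (auto simp: y_def symmap_def ue)
        also have "\<dots> = of_real (\<Prod>i<k. g i ^ \<alpha> i) * (\<Prod>i<k. esym n (Suc i) w ^ \<alpha> i)"
          by (simp add: power_mult_distrib prod.distrib)
        finally show "c' \<alpha> * (\<Prod>i<n. z i ^ \<alpha> i) = c \<alpha> * (\<Prod>i<k. y i ^ \<alpha> i)"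
          unfolding c'_def 1 by simp
      qed
      then show "\<exists>y\<in>Gamma k. cmod (mpeval n c' z) \<le> cmod (mpeval k c y)"
        using yG by auto
    qed
    finally show "onorm (opeval J k c (\<lambda>i x. g i *\<^sub>R T i x)) \<le> (SUP z\<in>Gamma k. cmod (mpeval k c z))" .
  qed
qed

end
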